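(* Let $\mathcal G$ be a good pseudogroup on a compact metric space $X$, $\mathcal G_1$ a good generating set and $\mathcal G_2$ the compacted generating set. Then there exists $\rho>0$ such that for all $x_0,y_0\in X$: if $y_0\in\Phi^1_{\rho/2}(x_0)$, then $\Phi^1_{\rho/2}(x_0)\subset\Phi^2_\rho(y_0)$.
   Context: $\mathrm{Homeo}(X)$: homeomorphisms $g:D_g\to R_g$ between open subsets of $X$, composed on natural domains $D_{h\circ g}=g^{-1}(D_h)$. A pseudogroup is a subset of $\mathrm{Homeo}(X)$ containing $\mathrm{id}_X$, closed under composition, inversion, restriction to open subsets, and gluing along open covers of the domain. $\Gamma$ generates $\mathcal G$ if $\bigcup_{g\in\Gamma}(D_g\cup R_g)=X$ and $\mathcal G$ is exactly the set of $g\in\mathrm{Homeo}(X)$ locally equal near each point of $D_g$ to a finite composition of elements of $\Gamma$ and their inverses. A finite generating set is symmetric if it contains $\mathrm{id}_X$ and is closed under inverses; a finite symmetric generating set $\mathcal G_1$ is good if for each $g\in\mathcal G_1$ there is a compact $K_g\subset D_g$ with $\mathcal G_2=\{g|_{\mathrm{int}(K_g)}:g\in\mathcal G_1\}$ still generating $\mathcal G$ ($\mathcal G_2$ is the compacted generating set; $\mathcal G$ is good if it has a good generating set). For $i=1,2$: $\mathcal G^i_n=\{h_1\circ\cdots\circ h_n:h_j\in\mathcal G_i\}$, $\mathcal G^{i,x}_n=\{g\in\mathcal G^i_n:x\in D_g\}$, $\Phi^i_\delta(x)=\{y\in X: d(g(x),g(y))\le\delta\ \forall n\in\mathbb N,\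 \forall g\in\mathcal G^{i,x}_n\cap\mathcal G^{i,y}_n\}$. *)

theory Defs
  imports "HOL-Analysis.Analysis"
begin

text \<open>Partial maps of the ambient type (the compact metric space X is the whole type).
  A partial homeomorphism g : D_g -> R_g is a map with dom = D_g, ran = R_g.
  Composition on natural domains is map composition.\<close>

definition phomeo :: "('a::topological_space \<rightharpoonup> 'a) \<Rightarrow> bool" where
  "phomeo f \<longleftrightarrow> open (dom f) \<and> open (ran f) \<and>
     (\<exists>g. homeomorphism (dom f) (ran f) (\<lambda>x. the (f x)) g)"

definition pinv :: "('a \<rightharpoonup> 'a) \<Rightarrow> ('a \<rightharpoonup> 'a)" where
  "pinv f = (\<lambda>y. if y \<in> ran f then Some (THE x. f x = Some y) else None)"

definition pcomp :: "('a \<rightharpoonup> 'a) list \<Rightarrow> ('a \<rightharpoonup> 'a)" where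
  "pcomp hs = foldr (\<lambda>h acc. h \<circ>\<^sub>m acc) hs Some"

definition pseudogroup :: "('a::topological_space \<rightharpoonup> 'a) set \<Rightarrow> bool" where
  "pseudogroup G \<longleftrightarrow> G \<subseteq> {f. phomeo f} \<and> Some \<in> G
     \<and> (\<forall>g\<in>G. \<forall>h\<in>G. h \<circ>\<^sub>m g \<in> G)
     \<and> (\<forall>g\<in>G. pinv g \<in> G)
     \<and> (\<forall>g\<in>G. \<forall>U. open U \<longrightarrow> g |` U \<in> G)
     \<and> (\<forall>f. phomeo f \<longrightarrow>
           (\<forall>x\<in>dom f. \<exists>U. open U \<and> x \<in> U \<and> f |` U \<in> G) \<longrightarrow> f \<in> G)"

definition generates :: "('a::topological_space \<rightharpoonup> 'a) set \<Rightarrow> ('a \<rightharpoonup> 'a) set \<Rightarrow> bool" where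
  "generates \<Gamma> G \<longleftrightarrow> \<Gamma> \<subseteq> {f. phomeo f}
     \<and> (\<Union>g\<in>\<Gamma>. dom g \<union> ran g) = UNIV
     \<and> G = {g. phomeo g \<and> (\<forall>x\<in>dom g. \<exists>ws U. set ws \<subseteq> \<Gamma> \<union> pinv ` \<Gamma> \<and>
                 open U \<and> x \<in> U \<and> U \<subseteq> dom g \<and> (\<forall>y\<in>U. g y = pcomp ws y))}"

definition symmetric_gen :: "('a \<rightharpoonup> 'a) set \<Rightarrow> bool" where
  "symmetric_gen \<Gamma> \<longleftrightarrow> finite \<Gamma> \<and> Some \<in> \<Gamma> \<and> (\<forall>g\<in>\<Gamma>. pinv g \<in> \<Gamma>)"

definition Gn :: "('a \<rightharpoonup> 'a) set \<Rightarrow> nat \<Rightarrow> ('a \<rightharpoonup> 'a) set" where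
  "Gn \<Gamma> n = {pcomp hs | hs. length hs = n \<and> set hs \<subseteq> \<Gamma>}"

definition Phi :: "('a::metric_space \<rightharpoonup> 'a) set \<Rightarrow> real \<Rightarrow> 'a \<Rightarrow> 'a set" where
  "Phi \<Gamma> \<delta> x = {y. \<forall>n. \<forall>g\<in>Gn \<Gamma> n. x \<in> dom g \<longrightarrow> y \<in> dom g \<longrightarrow>
                        dist (the (g x)) (the (g y)) \<le> \<delta>}"

end

theory Submission
  imports Defs
begin

lemma pcomp_Nil[simp]: "pcomp [] = Some" by (simp add: pcomp_def)
lemma pcomp_Cons[simp]: "pcomp (h # hs) = h \<circ>\<^sub>m pcomp hs" by (simp add: pcomp_def)

lemma restr_sub:
  "pcomp (map (\<lambda>g. g |` interior (K g)) hs) y = Some u \<Longrightarrow> pcomp hs y = Some u"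
proof (induction hs arbitrary: u)
  case Nil thus ?case by simp
next
  case (Cons h hs)
  then obtain w where w: "pcomp (map (\<lambda>g. g |` interior (K g)) hs) y = Some w"
    and "(h |` interior (K h)) w = Some u"
    by (auto simp: map_comp_Some_iff)
  then have "h w = Some u" by (auto simp: restrict_map_def split: if_splits)
  with Cons.IH[OF w] show ?case by simp
qed

lemma restr_dom:
  fixes x y :: "'a::metric_space"
  assumes cov: "\<forall>h\<in>G1. \<forall>k\<in>K h. \<forall>v. dist k v \<le> r \<longrightarrow> v \<in> dom h"
    and phi: "y \<in> Phi G1 r x"
  shows "set hs \<subseteq> G1 \<Longrightarrow> y \<in> dom (pcomp (map (\<lambda>g. g |` interior (K g)) hs))
     \<Longrightarrow> x \<in> dom (pcomp hs)"
proof (induction hs)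
  case Nil thus ?case by simp
next
  case (Cons h hs)
  from Cons.prems obtain u w where w: "pcomp (map (\<lambda>g. g |` interior (K g)) hs) y = Some w"
    and hu: "(h |` interior (K h)) w = Some u"
    by (auto simp: map_comp_Some_iff)
  have wK: "w \<in> K h" using hu interior_subset
    by (auto simp: restrict_map_def split: if_splits)
  have "y \<in> dom (pcomp (map (\<lambda>g. g |` interior (K g)) hs))" using w by blast
  with Cons.IH Cons.prems obtain v where v: "pcomp hs x = Some v" by auto
  have yw: "pcomp hs y = Some w" using restr_sub[OF w] .
  have "pcomp hs \<in> Gn G1 (length hs)" using Cons.prems unfolding Gn_def by auto
  with phi v yw have "dist v w \<le> r" unfolding Phi_def by fastforce
  then have "v \<in> dom h" using cov Cons.prems wK by (simp add: dist_commute)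
  then show ?case using v by (auto simp: map_comp_def)
qed

lemma list_from_image: "set hs \<subseteq> f ` A \<Longrightarrow> \<exists>hs'. set hs' \<subseteq> A \<and> hs = map f hs'"
proof (induction hs)
  case Nil thus ?case by simp
next
  case (Cons a hs)
  then obtain hs' where "set hs' \<subseteq> A" "hs = map f hs'" by auto
  moreover obtain b where "b \<in> A" "a = f b" using Cons.prems by auto
  ultimately show ?case by (intro exI[of _ "b # hs'"]) auto
qed

theorem mainTheorem8:
  fixes G G1 :: "('a::metric_space \<rightharpoonup> 'a) set"
    and K :: "('a \<rightharpoonup> 'a) \<Rightarrow> 'a set"
  assumes "compact (UNIV :: 'a set)"
    and "pseudogroup G"
    and "symmetric_gen G1"
    and "generates G1 G"
    and "\<forall>g\<in>G1. compact (K g) \<and> K g \<subseteq> dom g"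
    and "generates ((\<lambda>g. g |` interior (K g)) ` G1) G"
  shows "\<exists>\<rho>>0. \<forall>x0 y0. y0 \<in> Phi G1 (\<rho>/2) x0 \<longrightarrow>
           Phi G1 (\<rho>/2) x0 \<subseteq> Phi ((\<lambda>g. g |` interior (K g)) ` G1) \<rho> y0"
proof -
  have fin: "finite G1" and ne: "G1 \<noteq> {}" using assms(3) unfolding symmetric_gen_def by auto
  have "\<forall>h\<in>G1. \<exists>e>0. \<forall>k\<in>K h. \<forall>v. dist k v \<le> e \<longrightarrow> v \<in> dom h"
  proof
    fix h assume h: "h \<in> G1"
    have "open (dom h)" using h assms(4) unfolding generates_def phomeo_def by auto
    then obtain e where "e > 0" "(\<Union>x\<in>K h. cball x e) \<subseteq> dom h"
      using compact_subset_open_imp_cball_epsilon_subset[of "K h" "dom h"] assms(5) h by metis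
    then show "\<exists>e>0. \<forall>k\<in>K h. \<forall>v. dist k v \<le> e \<longrightarrow> v \<in> dom h" by (intro exI[of _ e]) (auto simp: subset_eq mem_cball)
  qed
  then obtain e where e: "\<forall>h\<in>G1. e h > 0 \<and> (\<forall>k\<in>K h. \<forall>v. dist k v \<le> e h \<longrightarrow> v \<in> dom h)"
    by metis
  define r where "r = Min (e ` G1)"
  have rpos: "r > 0" unfolding r_def using fin ne e by auto
  have cov: "\<forall>h\<in>G1. \<forall>k\<in>K h. \<forall>v. dist k v \<le> r \<longrightarrow> v \<in> dom h"
  proof (intro ballI allI impI)
    fix h k v assume "h \<in> G1" "k \<in> K h" "dist k v \<le> r"
    moreover have "r \<le> e h" unfolding r_def using fin \<open>h \<in> G1\<close> by auto
    ultimately show "v \<in> dom h" using e by auto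
  qed
  show ?thesis
  proof (intro exI[of _ "2*r"] conjI allI impI subsetI)
    show "2*r > 0" using rpos by simp
    fix x0 y0 z assume y0: "y0 \<in> Phi G1 (2*r/2) x0" and z: "z \<in> Phi G1 (2*r/2) x0"
    have y0': "y0 \<in> Phi G1 r x0" and z': "z \<in> Phi G1 r x0" using y0 z by auto
    show "z \<in> Phi ((\<lambda>g. g |` interior (K g)) ` G1) (2*r) y0"
      unfolding Phi_def
    proof (intro CollectI allI ballI impI)
      fix n g assume g: "g \<in> Gn ((\<lambda>g. g |` interior (K g)) ` G1) n"
        and dy: "y0 \<in> dom g" and dz: "z \<in> dom g"
      obtain hs where hs: "g = pcomp hs" "length hs = n" "set hs \<subseteq> (\<lambda>g. g |` interior (K g)) ` G1"
        using g unfolding Gn_def by auto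
      obtain hs' where hs': "set hs' \<subseteq> G1" "hs = map (\<lambda>g. g |` interior (K g)) hs'"
        using list_from_image[OF hs(3)] by auto
      have gn: "pcomp hs' \<in> Gn G1 n" using hs hs' unfolding Gn_def by auto
      have x0d: "x0 \<in> dom (pcomp hs')"
        using restr_dom[OF cov y0' hs'(1)] dy hs hs' by simp
      obtain a where a: "g y0 = Some a" using dy by auto
      obtain b where b: "g z = Some b" using dz by auto
      have a': "pcomp hs' y0 = Some a" using restr_sub a hs hs' by metis
      have b': "pcomp hs' z = Some b" using restr_sub b hs hs' by metis
      have "dist (the (pcomp hs' x0)) a \<le> r"
        using y0' gn x0d a' unfolding Phi_def by fastforce
      moreover have "dist (the (pcomp hs' x0)) b \<le> r"
        using z' gn x0d b' unfolding Phi_def by fastforce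
      ultimately have "dist a b \<le> 2*r" using dist_triangle3[of a b "the (pcomp hs' x0)"] by linarith
      then show "dist (the (g y0)) (the (g z)) \<le> 2*r" using a b by simp
    qed
  qed
qed

end
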